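(* Let $2\le n\le\kappa+1$, $\ell=\binom{\kappa}{n-1}$, $\beta=\kappa\ell$, and let $D\in\mathbb R^{\beta\times n\kappa^n}$ be the matrix constructed below with rows $d_1,\dots,d_\beta$. Then for $i,j=1,\dots,\beta$, $$\langle d_i,d_j\rangle=\begin{cases}0,& i\neq j,\\ n!,& i=j.\end{cases}$$
   Context: Semi-tensor product: for $A\in\mathbb R^{m\times n}$, $B\in\mathbb R^{p\times q}$ and $t=\mathrm{lcm}(n,p)$, $A\ltimes B=(A\otimes I_{t/n})(B\otimes I_{t/p})$; associative. Swap matrix $W_{[m,n]}\in\mathbb R^{mn\times mn}$: the permutation matrix with $W_{[m,n]}(X\otimes Y)=Y\otimes X$ for $X\in\mathbb R^m,Y\in\mathbb R^n$ ($W_{[1,n]}=I_n$). $\delta_\kappa^j$ is the $j$-th column of $I_\kappa$. Let $z^1,\dots,z^\ell$ be the strictly increasing tuples $(z_1<\dots<z_{n-1})$ with entries in $\{1,\dots,\kappa\}$, in lexicographic order. For $i=1,\dots,\ell$, $j=1,\dots,\kappa$ define $\eta^i_j\in\mathbb R^{\kappa^n}$ (row) by $(\eta^i_j)^T=\delta_\kappa^j\otimes\sum_{\sigma\in\mathbf S_{n-1}}\mathrm{sgn}(\sigma)\,\delta_\kappa^{z^i_{\sigma(1)}}\otimes\cdots\otimes\delta_\kappa^{z^i_{\sigma(n-1)}}$; $B\in\mathbb R^{\kappa\ell\times\kappa^n}$ has rows $\eta^1_1,\dots,\eta^1_\kappa,\dots,\eta^\ell_1,\dots,\eta^\ell_\kappa$.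 Then $D=\left[B,\,-B\ltimes W_{[\kappa^0,\kappa]}\ltimes W_{[\kappa,\kappa]},\,-B\ltimes W_{[\kappa,\kappa]}\ltimes W_{[\kappa,\kappa^2]},\dots,-B\ltimes W_{[\kappa^{n-2},\kappa]}\ltimes W_{[\kappa,\kappa^{n-1}]}\right]$. $\langle\cdot,\cdot\rangle$ is the standard inner product. *)

theory Defs
  imports "Jordan_Normal_Form.Matrix" "HOL-Combinatorics.Permutations" "HOL-Library.List_Lexorder"
begin

definition kron :: "real mat \<Rightarrow> real mat \<Rightarrow> real mat" where
  "kron A B = mat (dim_row A * dim_row B) (dim_col A * dim_col B)
     (\<lambda>(i, j). A $$ (i div dim_row B, j div dim_col B) * B $$ (i mod dim_row B, j mod dim_col B))"

definition stp :: "real mat \<Rightarrow> real mat \<Rightarrow> real mat" where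
  "stp A B = (let n = dim_col A; p = dim_row B; t = lcm n p in
      kron A (1\<^sub>m (t div n)) * kron B (1\<^sub>m (t div p)))"

text \<open>Swap matrix W_[m,n] (mn x mn permutation matrix with W (X \<otimes> Y) = Y \<otimes> X):
  it maps coordinate a*n+b of X \<otimes> Y to coordinate b*m+a of Y \<otimes> X.\<close>
definition swap_mat :: "nat \<Rightarrow> nat \<Rightarrow> real mat" where
  "swap_mat m n = mat (m * n) (m * n) (\<lambda>(r, c). if r = (c mod n) * m + c div n then 1 else 0)"

text \<open>delta_kappa^j, the j-th column of I_kappa (j is 1-based), as a kappa x 1 matrix.\<close>
definition delta :: "nat \<Rightarrow> nat \<Rightarrow> real mat" where
  "delta k j = mat k 1 (\<lambda>(r, c). if r = j - 1 then 1 else 0)"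

definition kron_list :: "real mat list \<Rightarrow> real mat" where
  "kron_list As = foldr kron As (1\<^sub>m 1)"

text \<open>The strictly increasing (n-1)-tuples z^1,...,z^l with entries in {1..kappa},
  in lexicographic order (tuples as lists, entries 1-based).\<close>
definition z_tuples :: "nat \<Rightarrow> nat \<Rightarrow> nat list list" where
  "z_tuples kappa m = sorted_list_of_set
     {zs. length zs = m \<and> sorted_wrt (<) zs \<and> set zs \<subseteq> {1..kappa}}"

text \<open>(eta^i_j)^T = delta_kappa^j \<otimes> \<Sum>_{\<sigma> \<in> S_{n-1}} sgn \<sigma> delta^{z_\<sigma>(1)} \<otimes> ... \<otimes> delta^{z_\<sigma>(n-1)},
  for the tuple zs = z^i; permutations of the positions {0..<n-1} (0-based).\<close>
definition eta_col :: "nat \<Rightarrow> nat \<Rightarrow> nat list \<Rightarrow> nat \<Rightarrow> real mat" where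
  "eta_col kappa n zs j = kron (delta kappa j)
     (mat (kappa ^ (n - 1)) 1 (\<lambda>(r, c).
        \<Sum>\<sigma> \<in> {\<sigma>. \<sigma> permutes {..<n - 1}}.
          of_int (sign \<sigma>) * kron_list (map (\<lambda>k. delta kappa (zs ! \<sigma> k)) [0..<n - 1]) $$ (r, c)))"

text \<open>B: rows eta^1_1,...,eta^1_kappa,...,eta^l_1,...,eta^l_kappa (0-based row r = (i-1)*kappa + (j-1)).\<close>
definition B_mat :: "nat \<Rightarrow> nat \<Rightarrow> real mat" where
  "B_mat kappa n = (let zs = z_tuples kappa (n - 1) in
     mat (kappa * length zs) (kappa ^ n)
       (\<lambda>(r, c). eta_col kappa n (zs ! (r div kappa)) (r mod kappa + 1) $$ (c, 0)))"

definition hcat :: "real mat \<Rightarrow> real mat \<Rightarrow> real mat" where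
  "hcat A B = mat (dim_row A) (dim_col A + dim_col B)
     (\<lambda>(i, j). if j < dim_col A then A $$ (i, j) else B $$ (i, j - dim_col A))"

definition hcat_list :: "nat \<Rightarrow> real mat list \<Rightarrow> real mat" where
  "hcat_list r As = foldr hcat As (0\<^sub>m r 0)"

definition D_mat :: "nat \<Rightarrow> nat \<Rightarrow> real mat" where
  "D_mat kappa n = (let B = B_mat kappa n in
     hcat_list (dim_row B)
       (B # map (\<lambda>k. - stp (stp B (swap_mat (kappa ^ (k - 1)) kappa)) (swap_mat kappa (kappa ^ k)))
               [1..<n]))"

end

theory Submission
  imports Defs
begin

lemma dim_kron[simp]: "dim_row (kron A B) = dim_row A * dim_row B" "dim_col (kron A B) = dim_col A * dim_col B"
  by (simp_all add: kron_def)

lemma index_kron: "i < dim_row A * dim_row B \<Longrightarrow> j < dim_col A * dim_col B \<Longrightarrow>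
  kron A B $$ (i,j) = A $$ (i div dim_row B, j div dim_col B) * B $$ (i mod dim_row B, j mod dim_col B)"
  by (simp add: kron_def)

lemma sum_div_mod: "(\<Sum>i<a*c. F (i div c) (i mod c)) = (\<Sum>p<a. \<Sum>q<c. F p q)" for c :: nat
proof (induction a)
  case 0 then show ?case by simp
next
  case (Suc a)
  have e: "{..<Suc a * c} = {..<a*c} \<union> {a*c..<a*c+c}" by auto
  have "(\<Sum>i\<in>{a*c..<a*c+c}. F (i div c) (i mod c)) = (\<Sum>q<c. F ((a*c+q) div c) ((a*c+q) mod c))"
    by (rule sum.reindex_bij_witness[of _ "\<lambda>q. a*c+q" "\<lambda>i. i - a*c"]) auto
  also have "\<dots> = (\<Sum>q<c. F a q)"
    by (rule sum.cong) (auto simp: add.commute[of "a*c"])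
  moreover have "(\<Sum>i<Suc a * c. F (i div c) (i mod c)) = (\<Sum>i<a*c. F (i div c) (i mod c)) + (\<Sum>i\<in>{a*c..<a*c+c}. F (i div c) (i mod c))"
    unfolding e by (rule sum.union_disjoint) auto
  ultimately show ?case using Suc by simp
qed

definition ip :: "real mat \<Rightarrow> real mat \<Rightarrow> real" where
  "ip A B = (\<Sum>r<dim_row A. A $$ (r,0) * B $$ (r,0))"

lemma ip_kron:
  assumes "dim_col A = 1" "dim_col B = 1" "dim_col C = 1" "dim_col D = 1"
    "dim_row B = dim_row A" "dim_row D = dim_row C"
  shows "ip (kron A C) (kron B D) = ip A B * ip C D"
proof -
  have "ip (kron A C) (kron B D) = (\<Sum>i<dim_row A * dim_row C.
     (A $$ (i div dim_row C, 0) * B $$ (i div dim_row C, 0)) * (C $$ (i mod dim_row C, 0) * D $$ (i mod dim_row C, 0)))"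
    unfolding ip_def using assms by (intro sum.cong) (auto simp: index_kron)
  also have "\<dots> = (\<Sum>p<dim_row A. \<Sum>q<dim_row C. (A $$ (p, 0) * B $$ (p, 0)) * (C $$ (q, 0) * D $$ (q, 0)))"
    by (rule sum_div_mod)
  also have "\<dots> = ip A B * ip C D" unfolding ip_def by (simp add: sum_product)
  finally show ?thesis .
qed

lemma dim_delta[simp]: "dim_row (delta k j) = k" "dim_col (delta k j) = 1"
  by (simp_all add: delta_def)

lemma ip_delta: "a \<in> {1..k} \<Longrightarrow> b \<in> {1..k} \<Longrightarrow> ip (delta k a) (delta k b) = (if a = b then 1 else 0)"
proof -
  assume a: "a \<in> {1..k}" and b: "b \<in> {1..k}"
  have "ip (delta k a) (delta k b) = (\<Sum>r<k. (if r = a - 1 then 1 else 0) * (if r = b - 1 then 1 else 0))"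
    unfolding ip_def by (intro sum.cong) (auto simp: delta_def)
  also have "\<dots> = (\<Sum>r<k. if r = a - 1 then (if a = b then 1 else 0) else 0)"
    using a b by (intro sum.cong) auto
  also have "\<dots> = (if a = b then 1 else 0)" using a by (subst sum.delta) auto
  finally show ?thesis .
qed

lemma dim_kron_list[simp]: "dim_row (kron_list (map (delta k) as)) = k ^ length as"
  "dim_col (kron_list (map (delta k) as)) = 1"
  by (induction as) (simp_all add: kron_list_def)

lemma ip_kron_list: "length as = length bs \<Longrightarrow> set as \<subseteq> {1..k} \<Longrightarrow> set bs \<subseteq> {1..k} \<Longrightarrow>
  ip (kron_list (map (delta k) as)) (kron_list (map (delta k) bs)) = (if as = bs then 1 else 0)"
proof (induction as arbitrary: bs)
  case Nil
  then show ?case by (simp add: kron_list_def ip_def)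
next
  case (Cons a as)
  then obtain b bs' where bs: "bs = b # bs'" by (cases bs) auto
  have k: "kron_list (map (delta k) (x # xs)) = kron (delta k x) (kron_list (map (delta k) xs))" for x xs
    by (simp add: kron_list_def)
  show ?case using Cons unfolding bs k
    by (subst ip_kron) (auto simp: ip_delta)
qed

lemma set_perm_map:
  assumes "length zs = m" "\<sigma> permutes {..<m}"
  shows "set (map (\<lambda>k. zs ! \<sigma> k) [0..<m]) = set zs"
proof -
  have "set (map (\<lambda>k. zs ! \<sigma> k) [0..<m]) = (\<lambda>i. zs ! i) ` (\<sigma> ` {..<m})"
    by (auto simp: image_image)
  also have "\<sigma> ` {..<m} = {..<m}" using assms(2) by (rule permutes_image)
  also have "(\<lambda>i. zs ! i) ` {..<m} = set zs" using assms(1) by (auto simp: set_conv_nth)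
  finally show ?thesis .
qed

lemma perm_match:
  fixes zs ws :: "nat list"
  assumes zs: "length zs = m" "sorted_wrt (<) zs" and ws: "length ws = m" "sorted_wrt (<) ws"
    and s: "\<sigma> permutes {..<m}" and t: "\<tau> permutes {..<m}"
  shows "(map (\<lambda>k. zs ! \<sigma> k) [0..<m] = map (\<lambda>k. ws ! \<tau> k) [0..<m]) \<longleftrightarrow> (zs = ws \<and> \<sigma> = \<tau>)"
proof
  assume eq: "map (\<lambda>k. zs ! \<sigma> k) [0..<m] = map (\<lambda>k. ws ! \<tau> k) [0..<m]"
  have "set zs = set ws" using set_perm_map[OF zs(1) s] set_perm_map[OF ws(1) t] eq by simp
  then have zw: "zs = ws" using strict_sorted_equal[OF ws(2) zs(2)] by simp
  have d: "distinct zs" using zs(2) by (simp add: strict_sorted_iff)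
  have "\<sigma> k = \<tau> k" for k
  proof (cases "k < m")
    case True
    then have "zs ! \<sigma> k = zs ! \<tau> k" using eq zw by (metis (no_types, lifting) diff_zero length_map length_upt nth_map_upt add_0 nth_map)
    moreover have "\<sigma> k < m" "\<tau> k < m" using permutes_in_image[OF s, of k] permutes_in_image[OF t, of k] True by auto
    ultimately show ?thesis using d zs(1) by (simp add: nth_eq_iff_index_eq)
  next
    case False
    then show ?thesis using s t by (simp add: permutes_def)
  qed
  then show "zs = ws \<and> \<sigma> = \<tau>" using zw by auto
qed simp

definition Vm :: "nat \<Rightarrow> nat \<Rightarrow> nat list \<Rightarrow> real mat" where
  "Vm kappa m zs = mat (kappa ^ m) 1 (\<lambda>(r, c).
        \<Sum>\<sigma> \<in> {\<sigma>. \<sigma> permutes {..<m}}.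
          of_int (sign \<sigma>) * kron_list (map (\<lambda>k. delta kappa (zs ! \<sigma> k)) [0..<m]) $$ (r, c))"

lemma eta_col_Vm: "eta_col kappa n zs j = kron (delta kappa j) (Vm kappa (n - 1) zs)"
  by (simp add: eta_col_def Vm_def)

lemma dim_Vm[simp]: "dim_row (Vm kappa m zs) = kappa ^ m" "dim_col (Vm kappa m zs) = 1"
  by (simp_all add: Vm_def)

lemma sign_sq: "(of_int (sign \<sigma>) :: real) * of_int (sign \<sigma>) = 1"
  by (simp add: sign_def)

lemma ip_Vm:
  fixes zs ws :: "nat list"
  assumes zs: "length zs = m" "sorted_wrt (<) zs" "set zs \<subseteq> {1..kappa}"
    and ws: "length ws = m" "sorted_wrt (<) ws" "set ws \<subseteq> {1..kappa}"
  shows "ip (Vm kappa m zs) (Vm kappa m ws) = (if zs = ws then fact m else 0)"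
proof -
  define P where "P = {\<sigma>. \<sigma> permutes {..<m}}"
  define K where "K = (\<lambda>xs \<sigma>. kron_list (map (delta kappa) (map (\<lambda>k. xs ! \<sigma> k) [0..<m])))"
  have dK: "dim_row (K xs \<sigma>) = kappa ^ m" "dim_col (K xs \<sigma>) = 1" for xs \<sigma>
    unfolding K_def by (simp_all only: dim_kron_list length_map length_upt) simp
  have V: "Vm kappa m xs $$ (r, 0) = (\<Sum>\<sigma>\<in>P. of_int (sign \<sigma>) * K xs \<sigma> $$ (r, 0))" if "r < kappa ^ m" for xs r
    using that by (simp add: Vm_def K_def P_def map_map o_def)
  have "ip (Vm kappa m zs) (Vm kappa m ws) = (\<Sum>r<kappa^m. (\<Sum>\<sigma>\<in>P. of_int (sign \<sigma>) * K zs \<sigma> $$ (r, 0)) *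
          (\<Sum>\<tau>\<in>P. of_int (sign \<tau>) * K ws \<tau> $$ (r, 0)))"
    unfolding ip_def by (intro sum.cong) (auto simp: V)
  also have "\<dots> = (\<Sum>\<sigma>\<in>P. \<Sum>\<tau>\<in>P. of_int (sign \<sigma>) * of_int (sign \<tau>) * ip (K zs \<sigma>) (K ws \<tau>))"
  proof -
    have "(\<Sum>r<kappa^m. (\<Sum>\<sigma>\<in>P. of_int (sign \<sigma>) * K zs \<sigma> $$ (r, 0)) *
          (\<Sum>\<tau>\<in>P. of_int (sign \<tau>) * K ws \<tau> $$ (r, 0))) =
        (\<Sum>r<kappa^m. \<Sum>\<sigma>\<in>P. \<Sum>\<tau>\<in>P. (of_int (sign \<sigma>) * K zs \<sigma> $$ (r, 0)) * (of_int (sign \<tau>) * K ws \<tau> $$ (r, 0)))"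
      by (simp add: sum_product)
    also have "\<dots> = (\<Sum>\<sigma>\<in>P. \<Sum>\<tau>\<in>P. \<Sum>r<kappa^m. (of_int (sign \<sigma>) * K zs \<sigma> $$ (r, 0)) * (of_int (sign \<tau>) * K ws \<tau> $$ (r, 0)))"
      by (subst sum.swap) (simp add: sum.swap[of _ P "{..<kappa^m}"])
    also have "\<dots> = (\<Sum>\<sigma>\<in>P. \<Sum>\<tau>\<in>P. of_int (sign \<sigma>) * of_int (sign \<tau>) * ip (K zs \<sigma>) (K ws \<tau>))"
      unfolding ip_def dK sum_distrib_left by (intro sum.cong refl) (simp add: algebra_simps)
    finally show ?thesis .
  qed
  also have "\<dots> = (\<Sum>\<sigma>\<in>P. \<Sum>\<tau>\<in>P. of_int (sign \<sigma>) * of_int (sign \<tau>) * (if zs = ws \<and> \<sigma> = \<tau> then 1 else 0))"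
  proof (intro sum.cong refl)
    fix \<sigma> \<tau> assume s: "\<sigma> \<in> P" and t: "\<tau> \<in> P"
    have "ip (K zs \<sigma>) (K ws \<tau>) = (if map (\<lambda>k. zs ! \<sigma> k) [0..<m] = map (\<lambda>k. ws ! \<tau> k) [0..<m] then 1 else 0)"
      unfolding K_def using set_perm_map[OF zs(1), of \<sigma>] set_perm_map[OF ws(1), of \<tau>] s t zs ws
      by (intro ip_kron_list) (simp_all add: P_def)
    also have "\<dots> = (if zs = ws \<and> \<sigma> = \<tau> then 1 else 0)"
      using perm_match[OF zs(1,2) ws(1,2)] s t by (simp add: P_def)
    finally show "of_int (sign \<sigma>) * of_int (sign \<tau>) * ip (K zs \<sigma>) (K ws \<tau>) =
      of_int (sign \<sigma>) * of_int (sign \<tau>) * (if zs = ws \<and> \<sigma> = \<tau> then 1 else 0)" by simp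
  qed
  also have "\<dots> = (if zs = ws then fact m else 0)"
  proof (cases "zs = ws")
    case True
    have fin: "finite P" unfolding P_def by (rule finite_permutations) simp
    have "(\<Sum>\<sigma>\<in>P. \<Sum>\<tau>\<in>P. of_int (sign \<sigma>) * of_int (sign \<tau>) * (if zs = ws \<and> \<sigma> = \<tau> then 1 else 0)) =
      (\<Sum>\<sigma>\<in>P. (1::real))"
      using True fin by (intro sum.cong refl) (simp add: if_distrib sign_sq cong: if_cong)
    also have "\<dots> = fact m" using card_permutations[of "{..<m}" m] by (simp add: P_def)
    finally show ?thesis using True by simp
  qed simp
  finally show ?thesis .
qed

definition Sz :: "nat \<Rightarrow> nat \<Rightarrow> nat list set" where
  "Sz kappa m = {zs. length zs = m \<and> sorted_wrt (<) zs \<and> set zs \<subseteq> {1..kappa}}"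

lemma finite_Sz: "finite (Sz kappa m)"
  by (rule finite_subset[OF _ finite_lists_length_eq[of "{1..kappa}" m]]) (auto simp: Sz_def)

lemma z_tuples_props: "set (z_tuples kappa m) = Sz kappa m" "distinct (z_tuples kappa m)"
  unfolding z_tuples_def Sz_def[symmetric] using finite_Sz by simp_all

lemma card_Sz: "card (Sz kappa m) = kappa choose m"
proof -
  have "bij_betw set (Sz kappa m) {A. A \<subseteq> {1..kappa} \<and> card A = m}"
  proof (rule bij_betw_byWitness[where f' = sorted_list_of_set])
    show "\<forall>a\<in>Sz kappa m. sorted_list_of_set (set a) = a"
      by (auto simp: Sz_def intro: strict_sorted_equal)
    show "\<forall>a'\<in>{A. A \<subseteq> {1..kappa} \<and> card A = m}. set (sorted_list_of_set a') = a'"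
    proof
      fix A assume "A \<in> {A. A \<subseteq> {1..kappa} \<and> card A = m}"
      then have "finite A" using finite_subset by auto
      then show "set (sorted_list_of_set A) = A" by simp
    qed
    show "set ` Sz kappa m \<subseteq> {A. A \<subseteq> {1..kappa} \<and> card A = m}"
      by (auto simp: Sz_def strict_sorted_iff distinct_card)
    show "sorted_list_of_set ` {A. A \<subseteq> {1..kappa} \<and> card A = m} \<subseteq> Sz kappa m"
    proof
      fix xs assume "xs \<in> sorted_list_of_set ` {A. A \<subseteq> {1..kappa} \<and> card A = m}"
      then obtain A where A: "A \<subseteq> {1..kappa}" "card A = m" "xs = sorted_list_of_set A" by auto
      then have "finite A" using finite_subset by auto
      then show "xs \<in> Sz kappa m" using A by (simp add: Sz_def)
    qed
  qed
  then have "card (Sz kappa m) = card {A. A \<subseteq> {1..kappa} \<and> card A = m}"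
    by (rule bij_betw_same_card)
  also have "\<dots> = kappa choose m" by (simp add: n_subsets)
  finally show ?thesis .
qed

lemma length_z_tuples: "length (z_tuples kappa m) = kappa choose m"
  using z_tuples_props card_Sz distinct_card by metis

lemma dim_B[simp]: "dim_row (B_mat kappa n) = kappa * (kappa choose (n - 1))" "dim_col (B_mat kappa n) = kappa ^ n"
  by (simp_all add: B_mat_def Let_def length_z_tuples)

lemma B_gram:
  assumes n: "1 \<le> n" and r: "r < kappa * (kappa choose (n - 1))" and r': "r' < kappa * (kappa choose (n - 1))"
  shows "row (B_mat kappa n) r \<bullet> row (B_mat kappa n) r' = (if r = r' then fact (n - 1) else 0)"
proof -
  define Z where "Z = z_tuples kappa (n - 1)"
  have LZ: "length Z = kappa choose (n - 1)" by (simp add: Z_def length_z_tuples)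
  have kp: "kappa > 0" using r by (cases kappa) auto
  have kn: "kappa * kappa ^ (n - 1) = kappa ^ n" using n by (cases n) auto
  define E where "E = (\<lambda>r. eta_col kappa n (Z ! (r div kappa)) (r mod kappa + 1))"
  have Bent: "B_mat kappa n $$ (x, c) = E x $$ (c, 0)" if "x < kappa * (kappa choose (n - 1))" "c < kappa ^ n" for x c
    unfolding B_mat_def Let_def Z_def[symmetric] using that by (simp add: LZ E_def)
  have dE: "dim_row (E x) = kappa ^ n" "dim_col (E x) = 1" for x
    using kn by (simp_all add: E_def eta_col_Vm)
  have "row (B_mat kappa n) r \<bullet> row (B_mat kappa n) r' = ip (E r) (E r')"
    unfolding scalar_prod_def ip_def dE using r r'
    by (intro sum.cong) (auto simp: Bent)
  also have "\<dots> = ip (delta kappa (r mod kappa + 1)) (delta kappa (r' mod kappa + 1)) *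
      ip (Vm kappa (n - 1) (Z ! (r div kappa))) (Vm kappa (n - 1) (Z ! (r' div kappa)))"
    unfolding E_def eta_col_Vm by (rule ip_kron) auto
  also have "\<dots> = (if r mod kappa = r' mod kappa then 1 else 0) * (if r div kappa = r' div kappa then fact (n - 1) else 0)"
  proof -
    have i: "r div kappa < length Z" "r' div kappa < length Z" using r r' LZ kp
      by (simp_all add: less_mult_imp_div_less mult.commute)
    have zin: "Z ! (x div kappa) \<in> Sz kappa (n - 1)" if "x div kappa < length Z" for x
      using that z_tuples_props(1) Z_def nth_mem by metis
    have "(Z ! (r div kappa) = Z ! (r' div kappa)) = (r div kappa = r' div kappa)"
      using z_tuples_props(2) i Z_def nth_eq_iff_index_eq by metis
    moreover have "ip (Vm kappa (n - 1) (Z ! (r div kappa))) (Vm kappa (n - 1) (Z ! (r' div kappa))) =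
        (if Z ! (r div kappa) = Z ! (r' div kappa) then fact (n - 1) else 0)"
      using zin[OF i(1)] zin[OF i(2)] by (intro ip_Vm) (auto simp: Sz_def)
    moreover have "ip (delta kappa (r mod kappa + 1)) (delta kappa (r' mod kappa + 1)) = (if r mod kappa = r' mod kappa then 1 else 0)"
      using kp by (subst ip_delta) (auto simp: Suc_le_eq)
    ultimately show ?thesis by simp
  qed
  also have "\<dots> = (if r = r' then fact (n - 1) else 0)"
    using div_mod_decomp[of r kappa] div_mod_decomp[of r' kappa] by (auto; metis)
  finally show ?thesis .
qed

definition is_perm :: "nat \<Rightarrow> real mat \<Rightarrow> bool" where
  "is_perm N P \<longleftrightarrow> P \<in> carrier_mat N N \<and> (\<exists>g. inj_on g {..<N} \<and> g ` {..<N} \<subseteq> {..<N} \<and>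
     (\<forall>i<N. \<forall>j<N. P $$ (i, j) = (if i = g j then 1 else 0)))"

lemma is_perm_orth: assumes "is_perm N P" shows "P * P\<^sup>T = 1\<^sub>m N"
proof -
  obtain g where P: "P \<in> carrier_mat N N" and inj: "inj_on g {..<N}" and im: "g ` {..<N} \<subseteq> {..<N}"
    and e: "\<And>i j. i < N \<Longrightarrow> j < N \<Longrightarrow> P $$ (i, j) = (if i = g j then 1 else 0)"
    using assms unfolding is_perm_def by blast
  have bij: "bij_betw g {..<N} {..<N}"
    using endo_inj_surj[OF _ im inj] inj by (simp add: bij_betw_def)
  show ?thesis
  proof (rule eq_matI)
    fix i i' assume i: "i < dim_row (1\<^sub>m N)" and i': "i' < dim_col (1\<^sub>m N)"
    then have ii: "i < N" "i' < N" by auto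
    have "(P * P\<^sup>T) $$ (i, i') = (\<Sum>j<N. (if i = g j then 1 else 0) * (if i' = g j then 1 else 0))"
      using P ii by (simp add: scalar_prod_def row_transpose lessThan_atLeast0 e)
    also have "\<dots> = (\<Sum>x<N. (if i = x then 1 else 0) * (if i' = x then 1 else 0))"
      using sum.reindex_bij_betw[OF bij, of "\<lambda>x. (if i = x then 1 else 0) * (if i' = x then (1::real) else 0)"] by simp
    also have "\<dots> = (\<Sum>x<N. if x = i then (if i = i' then 1 else 0) else 0)"
      by (intro sum.cong) auto
    also have "\<dots> = (if i = i' then 1 else 0)" using ii by (subst sum.delta) auto
    finally show "(P * P\<^sup>T) $$ (i, i') = 1\<^sub>m N $$ (i, i')" using ii by simp
  qed (use P in auto)
qed

lemma is_perm_swap: "is_perm (a * b) (swap_mat a b)"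
proof -
  define g where "g = (\<lambda>c. (c mod b) * a + c div b)"
  have lt: "g c < a * b" if "c < a * b" for c
  proof -
    have "c div b < a" using that by (simp add: less_mult_imp_div_less)
    then have "g c < (c mod b) * a + a" by (simp add: g_def)
    also have "\<dots> = (c mod b + 1) * a" by simp
    also have "\<dots> \<le> b * a" 
    proof -
      have "b > 0" using that by (cases "b = 0") auto
      then have "c mod b + 1 \<le> b" by (simp add: Suc_le_eq)
      then show ?thesis by (rule mult_right_mono) simp
    qed
    finally show ?thesis by (simp add: mult.commute)
  qed
  have dm: "g c div a = c mod b" "g c mod a = c div b" if "c < a * b" for c
  proof -
    have "c div b < a" using that by (simp add: less_mult_imp_div_less)
    then show "g c div a = c mod b" "g c mod a = c div b" by (simp_all add: g_def)
  qed
  have "inj_on g {..<a*b}"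
  proof (rule inj_onI)
    fix c c' assume "c \<in> {..<a*b}" "c' \<in> {..<a*b}" "g c = g c'"
    then have "c mod b = c' mod b" "c div b = c' div b" using dm by (metis lessThan_iff)+
    then show "c = c'" by (metis div_mult_mod_eq)
  qed
  moreover have "g ` {..<a*b} \<subseteq> {..<a*b}" using lt by auto
  ultimately show ?thesis unfolding is_perm_def
    by (intro conjI exI[of _ g]) (auto simp: swap_mat_def g_def)
qed

lemma kron_one1: "kron A (1\<^sub>m 1) = A"
  by (rule eq_matI) (auto simp: kron_def)

lemma is_perm_kron: assumes "is_perm N P" "s > 0" shows "is_perm (N * s) (kron P (1\<^sub>m s))"
proof -
  obtain g where P: "P \<in> carrier_mat N N" and inj: "inj_on g {..<N}" and im: "g ` {..<N} \<subseteq> {..<N}"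
    and e: "\<And>i j. i < N \<Longrightarrow> j < N \<Longrightarrow> P $$ (i, j) = (if i = g j then 1 else 0)"
    using assms unfolding is_perm_def by blast
  define h where "h = (\<lambda>j. g (j div s) * s + j mod s)"
  have jd: "j div s < N" if "j < N * s" for j using that by (simp add: less_mult_imp_div_less)
  have lt: "h j < N * s" if "j < N * s" for j
  proof -
    have "g (j div s) < N" using im jd[OF that] by auto
    then have "g (j div s) + 1 \<le> N" by simp
    have "h j < g (j div s) * s + s" using assms(2) by (simp add: h_def)
    also have "\<dots> = (g (j div s) + 1) * s" by simp
    also have "\<dots> \<le> N * s" using \<open>g (j div s) + 1 \<le> N\<close> by (rule mult_right_mono) simp
    finally show ?thesis .
  qed
  have hd: "h j div s = g (j div s)" "h j mod s = j mod s" for j using assms(2) by (simp_all add: h_def)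
  have "inj_on h {..<N*s}"
  proof (rule inj_onI)
    fix c c' assume c: "c \<in> {..<N*s}" "c' \<in> {..<N*s}" "h c = h c'"
    then have "g (c div s) = g (c' div s)" "c mod s = c' mod s" using hd by metis+
    moreover have "c div s \<in> {..<N}" "c' div s \<in> {..<N}" using c jd by auto
    ultimately have "c div s = c' div s" "c mod s = c' mod s" using inj by (auto dest: inj_onD)
    then show "c = c'" by (metis div_mult_mod_eq)
  qed
  moreover have "h ` {..<N*s} \<subseteq> {..<N*s}" using lt by auto
  moreover have "kron P (1\<^sub>m s) $$ (i, j) = (if i = h j then 1 else 0)" if "i < N * s" "j < N * s" for i j
  proof -
    have "kron P (1\<^sub>m s) $$ (i, j) = P $$ (i div s, j div s) * 1\<^sub>m s $$ (i mod s, j mod s)"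
      using that P by (simp add: index_kron)
    also have "\<dots> = (if i div s = g (j div s) \<and> i mod s = j mod s then 1 else 0)"
      using that jd assms(2) by (simp add: e)
    also have "\<dots> = (if i = h j then 1 else 0)"
      using hd by (metis div_mult_mod_eq h_def)
    finally show ?thesis .
  qed
  ultimately show ?thesis using P unfolding is_perm_def
    by (intro conjI exI[of _ h]) auto
qed

lemma gram_entry: "i < dim_row M \<Longrightarrow> j < dim_row M \<Longrightarrow> row M i \<bullet> row M j = (M * M\<^sup>T) $$ (i, j)"
  by (simp add: col_transpose)


lemma gram_perm:
  assumes A: "A \<in> carrier_mat r c" and P: "is_perm c P" and ij: "i < r" "j < r"
  shows "row (A * P) i \<bullet> row (A * P) j = row A i \<bullet> row A j"
proof -
  have Pc: "P \<in> carrier_mat c c" using P unfolding is_perm_def by blast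
  have "(A * P)\<^sup>T = P\<^sup>T * A\<^sup>T" using A Pc by (rule transpose_mult)
  then have "(A * P) * (A * P)\<^sup>T = (A * P) * (P\<^sup>T * A\<^sup>T)" by simp
  also have "\<dots> = A * P * P\<^sup>T * A\<^sup>T"
    using A Pc by (subst assoc_mult_mat[of "A * P" r c _ c _ r]) auto
  also have "A * P * P\<^sup>T * A\<^sup>T = A * (P * P\<^sup>T) * A\<^sup>T"
    using A Pc by (subst assoc_mult_mat[of A r c _ c _ c]) auto
  also have "\<dots> = A * A\<^sup>T" unfolding is_perm_orth[OF P] using A by (metis right_mult_one_mat)
  finally have e: "(A * P) * (A * P)\<^sup>T = A * A\<^sup>T" .
  have "row (A * P) i \<bullet> row (A * P) j = ((A * P) * (A * P)\<^sup>T) $$ (i, j)"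
    using A ij by (intro gram_entry) auto
  also have "\<dots> = (A * A\<^sup>T) $$ (i, j)" by (simp only: e)
  also have "\<dots> = row A i \<bullet> row A j" using A ij by (intro gram_entry[symmetric]) auto
  finally show ?thesis .
qed


lemma stp_perm:
  assumes A: "A \<in> carrier_mat r c" and c: "c > 0" and W: "is_perm p W" and p: "p > 0" "p dvd c"
  shows "\<exists>P. is_perm c P \<and> stp A W = A * P"
proof -
  have Wc: "dim_row W = p" using W unfolding is_perm_def by blast
  have l: "lcm c p = c" using p by (simp add: lcm_proj1_if_dvd_nat)
  have "stp A W = A * kron W (1\<^sub>m (c div p))"
  proof -
    have dA: "dim_col A = c" using A by simp
    show ?thesis unfolding stp_def Let_def Wc dA l using c kron_one1[of A, unfolded One_nat_def] by simp
  qed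
  moreover have "is_perm c (kron W (1\<^sub>m (c div p)))"
    using is_perm_kron[OF W, of "c div p"] p c by (auto elim!: dvdE)
  ultimately show ?thesis by blast
qed

lemma neg_gram: "i < dim_row (M::real mat) \<Longrightarrow> j < dim_row M \<Longrightarrow> row (- M) i \<bullet> row (- M) j = row M i \<bullet> row M j"
  unfolding scalar_prod_def by (intro sum.cong) (auto simp: index_uminus_mat)

lemma hcat_props:
  assumes "dim_row B = dim_row A"
  shows "dim_row (hcat A B) = dim_row A" "dim_col (hcat A B) = dim_col A + dim_col B"
    "i < dim_row A \<Longrightarrow> j < dim_row A \<Longrightarrow>
      row (hcat A B) i \<bullet> row (hcat A B) j = row A i \<bullet> row A j + row B i \<bullet> row B j"
proof -
  show "dim_row (hcat A B) = dim_row A" "dim_col (hcat A B) = dim_col A + dim_col B" by (simp_all add: hcat_def)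
  assume ij: "i < dim_row A" "j < dim_row A"
  define ca cb where "ca = dim_col A" and "cb = dim_col B"
  have "row (hcat A B) i \<bullet> row (hcat A B) j = (\<Sum>c = 0..<ca + cb. hcat A B $$ (i, c) * hcat A B $$ (j, c))"
    unfolding scalar_prod_def using ij by (intro sum.cong) (auto simp: hcat_def ca_def cb_def)
  also have "\<dots> = (\<Sum>c = 0..<ca. hcat A B $$ (i, c) * hcat A B $$ (j, c)) + (\<Sum>c = ca..<ca + cb. hcat A B $$ (i, c) * hcat A B $$ (j, c))"
    by (rule sum.atLeastLessThan_concat[symmetric]) auto
  also have "(\<Sum>c = 0..<ca. hcat A B $$ (i, c) * hcat A B $$ (j, c)) = row A i \<bullet> row A j"
    unfolding scalar_prod_def using ij by (intro sum.cong) (auto simp: hcat_def ca_def)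
  also have "(\<Sum>c = ca..<ca + cb. hcat A B $$ (i, c) * hcat A B $$ (j, c)) = (\<Sum>c = 0..<cb. hcat A B $$ (i, c + ca) * hcat A B $$ (j, c + ca))"
    using sum.shift_bounds_nat_ivl[of _ 0 ca cb] by (simp add: add.commute)
  also have "\<dots> = row B i \<bullet> row B j"
    unfolding scalar_prod_def using ij assms by (intro sum.cong) (auto simp: hcat_def ca_def cb_def)
  finally show "row (hcat A B) i \<bullet> row (hcat A B) j = row A i \<bullet> row A j + row B i \<bullet> row B j" .
qed

lemma hcat_list_props:
  assumes "\<forall>A \<in> set As. dim_row A = r"
  shows "dim_row (hcat_list r As) = r \<and> dim_col (hcat_list r As) = sum_list (map dim_col As) \<and>
    (\<forall>i<r. \<forall>j<r. row (hcat_list r As) i \<bullet> row (hcat_list r As) j = (\<Sum>A\<leftarrow>As. row A i \<bullet> row A j))"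
  using assms
proof (induction As)
  case Nil
  then show ?case by (simp add: hcat_list_def scalar_prod_def)
next
  case (Cons A As)
  have h: "hcat_list r (A # As) = hcat A (hcat_list r As)" by (simp add: hcat_list_def)
  have rA: "dim_row A = r" using Cons.prems by simp
  have IH: "dim_row (hcat_list r As) = r \<and> dim_col (hcat_list r As) = sum_list (map dim_col As) \<and>
    (\<forall>i<r. \<forall>j<r. row (hcat_list r As) i \<bullet> row (hcat_list r As) j = (\<Sum>A\<leftarrow>As. row A i \<bullet> row A j))"
    using Cons by simp
  then have dr: "dim_row (hcat_list r As) = dim_row A" using rA by simp
  show ?case unfolding h using hcat_props[OF dr] IH rA by simp
qed

lemma block_props:
  assumes n: "2 \<le> n" and kp: "kappa > 0" and k: "k \<in> set [1..<n]"
  defines "B \<equiv> B_mat kappa n"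
  defines "M \<equiv> - stp (stp B (swap_mat (kappa ^ (k - 1)) kappa)) (swap_mat kappa (kappa ^ k))"
  shows "dim_row M = dim_row B \<and> dim_col M = kappa ^ n \<and>
    (\<forall>i < dim_row B. \<forall>j < dim_row B. row M i \<bullet> row M j = row B i \<bullet> row B j)"
proof -
  define r where "r = dim_row B"
  have k1: "1 \<le> k" "k < n" using k by auto
  have Bc: "B \<in> carrier_mat r (kappa ^ n)" unfolding carrier_mat_def r_def B_def by simp
  have c0: "kappa ^ n > 0" using kp by simp
  have W1: "is_perm (kappa ^ k) (swap_mat (kappa ^ (k - 1)) kappa)"
  proof -
    have "kappa ^ (k - 1) * kappa = kappa ^ k" using k1 by (cases k) auto
    then show ?thesis using is_perm_swap[of "kappa ^ (k - 1)" kappa] by simp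
  qed
  have W2: "is_perm (kappa ^ (k + 1)) (swap_mat kappa (kappa ^ k))"
    using is_perm_swap[of kappa "kappa ^ k"] by (simp add: mult.commute)
  have d1: "kappa ^ k dvd kappa ^ n" using k1 by (simp add: le_imp_power_dvd)
  have d2: "kappa ^ (k + 1) dvd kappa ^ n" using k1 by (intro le_imp_power_dvd) simp
  obtain P1 where P1: "is_perm (kappa ^ n) P1" "stp B (swap_mat (kappa ^ (k - 1)) kappa) = B * P1"
    using stp_perm[OF Bc c0 W1 _ d1] kp by auto
  have P1c: "P1 \<in> carrier_mat (kappa ^ n) (kappa ^ n)" using P1(1) unfolding is_perm_def by blast
  have BPc: "B * P1 \<in> carrier_mat r (kappa ^ n)" using Bc P1c by simp
  obtain P2 where P2: "is_perm (kappa ^ n) P2" "stp (B * P1) (swap_mat kappa (kappa ^ k)) = B * P1 * P2"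
    using stp_perm[OF BPc c0 W2 _ d2] kp by auto
  have P2c: "P2 \<in> carrier_mat (kappa ^ n) (kappa ^ n)" using P2(1) unfolding is_perm_def by blast
  have M: "M = - (B * P1 * P2)" unfolding M_def P1(2) P2(2) ..
  have "row M i \<bullet> row M j = row B i \<bullet> row B j" if "i < r" "j < r" for i j
  proof -
    have "row M i \<bullet> row M j = row (B * P1 * P2) i \<bullet> row (B * P1 * P2) j"
      unfolding M using that Bc P1c P2c by (intro neg_gram) auto
    also have "\<dots> = row (B * P1) i \<bullet> row (B * P1) j" by (rule gram_perm[OF BPc P2(1) that])
    also have "\<dots> = row B i \<bullet> row B j" by (rule gram_perm[OF Bc P1(1) that])
    finally show ?thesis .
  qed
  moreover have "dim_row M = r" "dim_col M = kappa ^ n" unfolding M using Bc P1c P2c by auto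
  ultimately show ?thesis unfolding r_def by simp
qed

theorem proposition4p7:
  fixes n kappa :: nat
  assumes "2 \<le> n" and "n \<le> kappa + 1"
  shows "dim_row (D_mat kappa n) = kappa * (kappa choose (n - 1))
    \<and> dim_col (D_mat kappa n) = n * kappa ^ n
    \<and> (\<forall>i < kappa * (kappa choose (n - 1)). \<forall>j < kappa * (kappa choose (n - 1)).
          row (D_mat kappa n) i \<bullet> row (D_mat kappa n) j = (if i = j then fact n else 0))"
proof -
  define B where "B = B_mat kappa n"
  define r where "r = kappa * (kappa choose (n - 1))"
  define f where "f = (\<lambda>k. - stp (stp B (swap_mat (kappa ^ (k - 1)) kappa)) (swap_mat kappa (kappa ^ k)))"
  have kp: "kappa > 0" using assms by auto
  have rB: "dim_row B = r" "dim_col B = kappa ^ n" by (simp_all add: B_def r_def)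
  have bp: "dim_row (f k) = r \<and> dim_col (f k) = kappa ^ n \<and>
    (\<forall>i < r. \<forall>j < r. row (f k) i \<bullet> row (f k) j = row B i \<bullet> row B j)" if "k \<in> set [1..<n]" for k
  proof -
    have "dim_row (B_mat kappa n) = r" by (simp add: r_def)
    then show ?thesis using block_props[OF assms(1) kp that] unfolding f_def B_def by metis
  qed
  have D: "D_mat kappa n = hcat_list r (B # map f [1..<n])"
    unfolding D_mat_def Let_def B_def[symmetric] f_def rB ..
  have all: "\<forall>A \<in> set (B # map f [1..<n]). dim_row A = r" using bp rB by auto
  note H = hcat_list_props[OF all]
  have dc: "sum_list (map dim_col (B # map f [1..<n])) = n * kappa ^ n"
  proof -
    have "map dim_col (map f [1..<n]) = map (\<lambda>_. kappa ^ n) [1..<n]" using bp by simp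
    then have "sum_list (map dim_col (map f [1..<n])) = (n - 1) * kappa ^ n"
      by (simp only: sum_list_triv) simp
    then have "sum_list (map dim_col (B # map f [1..<n])) = kappa ^ n + (n - 1) * kappa ^ n"
      using rB by simp
    also have "\<dots> = n * kappa ^ n" using assms(1) by (cases n) auto
    finally show ?thesis .
  qed
  have ip: "(\<Sum>A\<leftarrow>B # map f [1..<n]. row A i \<bullet> row A j) = (if i = j then fact n else 0)" if "i < r" "j < r" for i j
  proof -
    have Bg: "row B i \<bullet> row B j = (if i = j then fact (n - 1) else 0)"
      using B_gram[of n i kappa j] assms(1) that by (simp add: B_def r_def)
    have "map (\<lambda>A. row A i \<bullet> row A j) (map f [1..<n]) = map (\<lambda>_. row B i \<bullet> row B j) [1..<n]"
      using bp that by simp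
    then have "sum_list (map (\<lambda>A. row A i \<bullet> row A j) (map f [1..<n])) = real (n - 1) * (row B i \<bullet> row B j)"
      by (simp only: sum_list_triv) simp
    then have "(\<Sum>A\<leftarrow>B # map f [1..<n]. row A i \<bullet> row A j) = row B i \<bullet> row B j + real (n - 1) * (row B i \<bullet> row B j)"
      by simp
    also have "\<dots> = real n * (row B i \<bullet> row B j)"
      using assms(1) by (simp add: of_nat_diff algebra_simps)
    also have "\<dots> = (if i = j then fact n else 0)"
      unfolding Bg using assms(1) by (simp add: fact_reduce[of n])
    finally show ?thesis .
  qed
  show ?thesis unfolding D using H dc ip by (simp add: r_def)
qed

end
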